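(* Let $\rho_{AB}\in\mathcal{S}_\le(\mathcal{H}_{AB})$ and let $\{P^i_A\}_{i\in I}$ be a collection of projectors forming a projective measurement on $\mathcal{H}_A$. For each $i$ with $p_i:=\mathrm{tr}[P^i_A\rho_{AB}]\ne0$ let $\rho^i_{AB}=\frac1{p_i}P^i_A\rho_{AB}P^i_A$. Then $$I_{\max}(A:B)_\rho\ge\max_i I_{\max}(A:B)_{\rho^i},$$ the maximum ranging over all $i$ with $p_i\neq0$.
   Context: Finite-dimensional Hilbert spaces; logarithms base 2. $\mathcal{S}_\le(\mathcal{H})$: positive semidefinite operators of trace $\le1$; $\mathcal{S}_=(\mathcal{H})$: trace 1. $D_{\max}(\rho\|\sigma)=\inf\{\lambda\in\mathbb{R}:2^\lambda\sigma\ge\rho\}$. $I_{\max}(A:B)_\rho=\inf_{\sigma_B\in\mathcal{S}_=(\mathcal{H}_B)}D_{\max}(\rho_{AB}\|\rho_A\otimes\sigma_B)$. *)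

theory Defs
  imports "HOL-Library.Extended_Real" "Jordan_Normal_Form.Schur_Decomposition"
begin

text \<open>Positive semidefinite n x n complex matrix: the quadratic form v* A v is real and nonnegative
  for every vector v (over complex scalars this also forces A to be Hermitian).\<close>
definition psd :: "nat \<Rightarrow> complex mat \<Rightarrow> bool" where
  "psd n A \<longleftrightarrow> A \<in> carrier_mat n n \<and>
     (\<forall>v \<in> carrier_vec n. conjugate v \<bullet> (A *\<^sub>v v) \<in> \<real> \<and> 0 \<le> Re (conjugate v \<bullet> (A *\<^sub>v v)))"

definition loewner_le :: "nat \<Rightarrow> complex mat \<Rightarrow> complex mat \<Rightarrow> bool" where
  "loewner_le n A B \<longleftrightarrow> A \<in> carrier_mat n n \<and> B \<in> carrier_mat n n \<and> psd n (B - A)"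

definition mtrace :: "complex mat \<Rightarrow> complex" where
  "mtrace A = (\<Sum>i<dim_row A. A $$ (i, i))"

definition subnormalized_state :: "nat \<Rightarrow> complex mat \<Rightarrow> bool" where
  "subnormalized_state n \<rho> \<longleftrightarrow> psd n \<rho> \<and> Re (mtrace \<rho>) \<le> 1"

definition normalized_state :: "nat \<Rightarrow> complex mat \<Rightarrow> bool" where
  "normalized_state n \<rho> \<longleftrightarrow> psd n \<rho> \<and> mtrace \<rho> = 1"

text \<open>Kronecker (tensor) product; H_AB = H_A \<otimes> H_B with index (a,b) \<mapsto> a * dB + b.\<close>
definition kron :: "complex mat \<Rightarrow> complex mat \<Rightarrow> complex mat" where
  "kron A B = mat (dim_row A * dim_row B) (dim_col A * dim_col B)
     (\<lambda>(i, j). A $$ (i div dim_row B, j div dim_col B) * B $$ (i mod dim_row B, j mod dim_col B))"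

definition ptrace_B :: "nat \<Rightarrow> nat \<Rightarrow> complex mat \<Rightarrow> complex mat" where
  "ptrace_B dA dB R = mat dA dA (\<lambda>(i, j). \<Sum>k<dB. R $$ (i * dB + k, j * dB + k))"

text \<open>D_max(rho||sigma) = inf {lambda. 2^lambda sigma \<ge> rho}, valued in extended reals
  (inf of the empty set is +infinity).\<close>
definition Dmax :: "nat \<Rightarrow> complex mat \<Rightarrow> complex mat \<Rightarrow> ereal" where
  "Dmax n \<rho> \<sigma> = Inf {ereal l | l. loewner_le n \<rho> (complex_of_real (2 powr l) \<cdot>\<^sub>m \<sigma>)}"

definition Imax :: "nat \<Rightarrow> nat \<Rightarrow> complex mat \<Rightarrow> ereal" where
  "Imax dA dB \<rho> = Inf {Dmax (dA * dB) \<rho> (kron (ptrace_B dA dB \<rho>) \<sigma>) | \<sigma>. normalized_state dB \<sigma>}"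

definition projector :: "nat \<Rightarrow> complex mat \<Rightarrow> bool" where
  "projector n P \<longleftrightarrow> P \<in> carrier_mat n n \<and> P * P = P \<and> mat_adjoint P = P"

definition projective_measurement :: "nat \<Rightarrow> 'i set \<Rightarrow> ('i \<Rightarrow> complex mat) \<Rightarrow> bool" where
  "projective_measurement n I P \<longleftrightarrow> finite I \<and> (\<forall>i\<in>I. projector n (P i)) \<and>
     (\<forall>a<n. \<forall>b<n. (\<Sum>i\<in>I. P i $$ (a, b)) = (if a = b then 1 else 0))"

end

theory Submission
  imports Defs
begin

lemma sum_reindex_prod:
  fixes f :: "nat \<Rightarrow> 'a::comm_monoid_add"
  shows "(\<Sum>k<a*b. f k) = (\<Sum>x<a. \<Sum>y<b. f (x*b+y))"
proof (induction a)
  case 0 then show ?case by simp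
next
  case (Suc a)
  have e: "{..<Suc a * b} = {..<a*b} \<union> {a*b..<a*b+b}" by auto
  have "(\<Sum>k<Suc a*b. f k) = sum f ({..<a*b} \<union> {a*b..<a*b+b})" by (simp only: e)
  also have "\<dots> = (\<Sum>k<a*b. f k) + (\<Sum>k\<in>{a*b..<a*b+b}. f k)"
    by (rule sum.union_disjoint) auto
  also have "(\<Sum>k\<in>{a*b..<a*b+b}. f k) = (\<Sum>y<b. f (a*b+y))"
    using sum.shift_bounds_nat_ivl[of f 0 "a*b" b] by (simp add: lessThan_atLeast0 add.commute)
  finally show ?case using Suc by simp
qed

lemma idx_lt: "a < (dA::nat) \<Longrightarrow> b < dB \<Longrightarrow> a*dB+b < dA*dB"
proof -
  assume "a < dA" "b < dB"
  hence "a*dB+b < a*dB + dB" by simp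
  also have "\<dots> = Suc a * dB" by simp
  also have "\<dots> \<le> dA*dB" using \<open>a<dA\<close> by (intro mult_le_mono1) simp
  finally show ?thesis .
qed

lemma idx_div: "b < (dB::nat) \<Longrightarrow> (a*dB+b) div dB = a" by simp
lemma idx_mod: "b < (dB::nat) \<Longrightarrow> (a*dB+b) mod dB = b" by simp

lemma div_lt: "i < (dA::nat)*dB \<Longrightarrow> i div dB < dA"
  by (simp add: less_mult_imp_div_less)
lemma mod_lt: "i < (dA::nat)*dB \<Longrightarrow> i mod dB < dB"
  by (cases dB) auto

lemma kron_carrier: "kron A B \<in> carrier_mat (dim_row A * dim_row B) (dim_col A * dim_col B)"
  unfolding kron_def by simp

lemma kron_index:
  assumes "i < dA*dB" "k < dA*dB" "P \<in> carrier_mat dA dA"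
  shows "kron P (1\<^sub>m dB) $$ (i,k) = P $$ (i div dB, k div dB) * (if i mod dB = k mod dB then 1 else 0)"
proof -
  have "0 < dB" using assms by (cases dB) auto
  thus ?thesis using assms unfolding kron_def by simp
qed

lemma kron_index_gen:
  assumes "i < dA*dB" "k < dA*dB" "A \<in> carrier_mat dA dA" "B \<in> carrier_mat dB dB"
  shows "kron A B $$ (i,k) = A $$ (i div dB, k div dB) * B $$ (i mod dB, k mod dB)"
  using assms unfolding kron_def by simp

lemma kron_left_mult:
  fixes P X :: "complex mat"
  assumes P: "P \<in> carrier_mat dA dA" and X: "X \<in> carrier_mat (dA*dB) m"
    and i: "i < dA*dB" and j: "j < m"
  shows "(kron P (1\<^sub>m dB) * X) $$ (i,j) = (\<Sum>a<dA. P $$ (i div dB, a) * X $$ (a*dB + i mod dB, j))"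
proof -
  have K: "kron P (1\<^sub>m dB) \<in> carrier_mat (dA*dB) (dA*dB)" using kron_carrier[of P "1\<^sub>m dB"] P by simp
  have "(kron P (1\<^sub>m dB) * X) $$ (i,j) = (\<Sum>k<dA*dB. kron P (1\<^sub>m dB) $$ (i,k) * X $$ (k,j))"
    using i j X K by (auto simp: scalar_prod_def lessThan_atLeast0 intro!: sum.cong)
  also have "\<dots> = (\<Sum>a<dA. \<Sum>b<dB. kron P (1\<^sub>m dB) $$ (i,a*dB+b) * X $$ (a*dB+b, j))"
    by (rule sum_reindex_prod)
  also have "\<dots> = (\<Sum>a<dA. \<Sum>b<dB. (if i mod dB = b then P $$ (i div dB, a) * X $$ (a*dB+b, j) else 0))"
    using i P by (intro sum.cong refl) (simp add: kron_index idx_lt)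
  also have "\<dots> = (\<Sum>a<dA. P $$ (i div dB, a) * X $$ (a*dB + i mod dB, j))"
    using mod_lt[OF i] by (simp add: sum.delta)
  finally show ?thesis .
qed

lemma kron_right_mult:
  fixes P Y :: "complex mat"
  assumes P: "P \<in> carrier_mat dA dA" and Y: "Y \<in> carrier_mat m (dA*dB)"
    and i: "i < m" and j: "j < dA*dB"
  shows "(Y * kron P (1\<^sub>m dB)) $$ (i,j) = (\<Sum>b<dA. Y $$ (i, b*dB + j mod dB) * P $$ (b, j div dB))"
proof -
  have K: "kron P (1\<^sub>m dB) \<in> carrier_mat (dA*dB) (dA*dB)" using kron_carrier[of P "1\<^sub>m dB"] P by simp
  have "(Y * kron P (1\<^sub>m dB)) $$ (i,j) = (\<Sum>k<dA*dB. Y $$ (i,k) * kron P (1\<^sub>m dB) $$ (k,j))"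
    using i j Y K by (auto simp: scalar_prod_def lessThan_atLeast0 intro!: sum.cong)
  also have "\<dots> = (\<Sum>a<dA. \<Sum>b<dB. Y $$ (i,a*dB+b) * kron P (1\<^sub>m dB) $$ (a*dB+b, j))"
    by (rule sum_reindex_prod)
  also have "\<dots> = (\<Sum>a<dA. \<Sum>b<dB. (if b = j mod dB then Y $$ (i,a*dB+b) * P $$ (a, j div dB) else 0))"
    using j P mod_lt[OF j] by (intro sum.cong refl) (simp add: kron_index[OF _ _ P] idx_lt)
  also have "\<dots> = (\<Sum>b<dA. Y $$ (i, b*dB + j mod dB) * P $$ (b, j div dB))"
    using mod_lt[OF j] by (simp add: sum.delta')
  finally show ?thesis .
qed

lemma kron_sandwich:
  fixes P X :: "complex mat"
  assumes P: "P \<in> carrier_mat dA dA" and X: "X \<in> carrier_mat (dA*dB) (dA*dB)"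
    and i: "i < dA*dB" and j: "j < dA*dB"
  shows "(kron P (1\<^sub>m dB) * X * kron P (1\<^sub>m dB)) $$ (i,j) =
     (\<Sum>a<dA. \<Sum>b<dA. P $$ (i div dB, a) * X $$ (a*dB + i mod dB, b*dB + j mod dB) * P $$ (b, j div dB))"
proof -
  have K: "kron P (1\<^sub>m dB) \<in> carrier_mat (dA*dB) (dA*dB)" using kron_carrier[of P "1\<^sub>m dB"] P by simp
  have "(kron P (1\<^sub>m dB) * X * kron P (1\<^sub>m dB)) $$ (i,j) =
     (\<Sum>b<dA. (kron P (1\<^sub>m dB) * X) $$ (i, b*dB + j mod dB) * P $$ (b, j div dB))"
    using K X i j P by (intro kron_right_mult) auto
  also have "\<dots> = (\<Sum>b<dA. (\<Sum>a<dA. P $$ (i div dB, a) * X $$ (a*dB + i mod dB, b*dB + j mod dB)) * P $$ (b, j div dB))"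
    using X i j P mod_lt[OF j] by (intro sum.cong refl, subst kron_left_mult) (auto simp: idx_lt)
  also have "\<dots> = (\<Sum>b<dA. \<Sum>a<dA. P $$ (i div dB, a) * X $$ (a*dB + i mod dB, b*dB + j mod dB) * P $$ (b, j div dB))"
    by (simp add: sum_distrib_right)
  finally show ?thesis by (subst sum.swap) simp
qed



lemma adjoint_index:
  fixes P :: "complex mat"
  assumes "P \<in> carrier_mat n n" "a < n" "b < n"
  shows "mat_adjoint P $$ (a,b) = cnj (P $$ (b,a))"
  using assms unfolding mat_adjoint_def by (simp add: mat_of_rows_index)

lemma proj_herm:
  assumes "projector n P" "a < n" "b < n"
  shows "P $$ (b,a) = cnj (P $$ (a,b))"
proof -
  have "P $$ (b,a) = mat_adjoint P $$ (b,a)" using assms unfolding projector_def by simp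
  thus ?thesis using assms adjoint_index[of P n b a] unfolding projector_def by simp
qed

lemma kron_herm:
  assumes P: "projector dA P" and i: "i < dA*dB" and k: "k < dA*dB"
  shows "kron P (1\<^sub>m dB) $$ (k,i) = cnj (kron P (1\<^sub>m dB) $$ (i,k))"
proof -
  have Pc: "P \<in> carrier_mat dA dA" using P unfolding projector_def by simp
  show ?thesis using kron_index[OF i k Pc] kron_index[OF k i Pc] proj_herm[OF P div_lt[OF i] div_lt[OF k]]
    by auto
qed

lemma kron_idem:
  assumes P: "projector dA P"
  shows "kron P (1\<^sub>m dB) * kron P (1\<^sub>m dB) = kron P (1\<^sub>m dB)"
proof -
  have Pc: "P \<in> carrier_mat dA dA" and PP: "P * P = P" using P unfolding projector_def by auto
  have K: "kron P (1\<^sub>m dB) \<in> carrier_mat (dA*dB) (dA*dB)" using kron_carrier[of P "1\<^sub>m dB"] Pc by simp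
  show ?thesis
  proof (rule eq_matI)
    fix i j assume i: "i < dim_row (kron P (1\<^sub>m dB))" and j: "j < dim_col (kron P (1\<^sub>m dB))"
    hence i: "i < dA*dB" and j: "j < dA*dB" using K by auto
    have "(kron P (1\<^sub>m dB) * kron P (1\<^sub>m dB)) $$ (i,j) =
        (\<Sum>a<dA. P $$ (i div dB, a) * kron P (1\<^sub>m dB) $$ (a*dB + i mod dB, j))"
      using kron_left_mult[OF Pc K i j] .
    also have "\<dots> = (\<Sum>a<dA. P $$ (i div dB, a) * (P $$ (a, j div dB) * (if i mod dB = j mod dB then 1 else 0)))"
      using mod_lt[OF i] j by (intro sum.cong refl) (simp add: kron_index[OF _ _ Pc] idx_lt)
    also have "\<dots> = (P * P) $$ (i div dB, j div dB) * (if i mod dB = j mod dB then 1 else 0)"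
    proof -
      have "(\<Sum>a<dA. P $$ (i div dB, a) * (P $$ (a, j div dB) * (if i mod dB = j mod dB then 1 else 0)))
         = (\<Sum>a<dA. P $$ (i div dB, a) * P $$ (a, j div dB)) * (if i mod dB = j mod dB then 1 else 0)"
        by (simp add: sum_distrib_right mult.assoc)
      also have "(\<Sum>a<dA. P $$ (i div dB, a) * P $$ (a, j div dB)) = (P * P) $$ (i div dB, j div dB)"
        using Pc div_lt[OF i] div_lt[OF j] by (auto simp: scalar_prod_def lessThan_atLeast0 intro!: sum.cong)
      finally show ?thesis .
    qed
    also have "\<dots> = kron P (1\<^sub>m dB) $$ (i,j)" using PP kron_index[OF i j Pc] by simp
    finally show "(kron P (1\<^sub>m dB) * kron P (1\<^sub>m dB)) $$ (i,j) = kron P (1\<^sub>m dB) $$ (i,j)" .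
  qed (use K in auto)
qed



lemma adj_move:
  fixes B :: "complex mat"
  assumes B: "B \<in> carrier_mat n n" and herm: "\<And>i k. i < n \<Longrightarrow> k < n \<Longrightarrow> B $$ (k,i) = cnj (B $$ (i,k))"
    and v: "v \<in> carrier_vec n" and u: "u \<in> carrier_vec n"
  shows "conjugate v \<bullet> (B *\<^sub>v u) = conjugate (B *\<^sub>v v) \<bullet> u"
proof -
  have "conjugate v \<bullet> (B *\<^sub>v u) = (\<Sum>i<n. cnj (v $ i) * (\<Sum>k<n. B $$ (i,k) * u $ k))"
    using B v u by (auto simp: scalar_prod_def lessThan_atLeast0 intro!: sum.cong)
  also have "\<dots> = (\<Sum>i<n. \<Sum>k<n. cnj (v $ i) * B $$ (i,k) * u $ k)"
    by (simp add: sum_distrib_left mult.assoc)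
  also have "\<dots> = (\<Sum>k<n. \<Sum>i<n. cnj (v $ i) * B $$ (i,k) * u $ k)"
    by (rule sum.swap)
  also have "\<dots> = (\<Sum>k<n. cnj (\<Sum>i<n. B $$ (k,i) * v $ i) * u $ k)"
  proof (intro sum.cong refl)
    fix k assume k: "k \<in> {..<n}"
    have "cnj (\<Sum>i<n. B $$ (k,i) * v $ i) * u $ k = (\<Sum>i<n. cnj (B $$ (k,i)) * cnj (v $ i) * u $ k)"
      by (simp add: cnj_sum sum_distrib_right)
    also have "\<dots> = (\<Sum>i<n. cnj (v $ i) * B $$ (i,k) * u $ k)"
    proof (intro sum.cong refl)
      fix i assume i: "i \<in> {..<n}"
      have "cnj (B $$ (k,i)) = B $$ (i,k)" using herm[of i k] i k by simp
      thus "cnj (B $$ (k,i)) * cnj (v $ i) * u $ k = cnj (v $ i) * B $$ (i,k) * u $ k" by simp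
    qed
    finally show "(\<Sum>i<n. cnj (v $ i) * B $$ (i,k) * u $ k) = cnj (\<Sum>i<n. B $$ (k,i) * v $ i) * u $ k" by simp
  qed
  also have "\<dots> = conjugate (B *\<^sub>v v) \<bullet> u"
    using B v u by (auto simp: scalar_prod_def lessThan_atLeast0 intro!: sum.cong)
  finally show ?thesis .
qed

lemma psd_congr:
  fixes B M :: "complex mat"
  assumes M: "psd n M" and B: "B \<in> carrier_mat n n" and herm: "\<And>i k. i < n \<Longrightarrow> k < n \<Longrightarrow> B $$ (k,i) = cnj (B $$ (i,k))"
  shows "psd n (B * M * B)"
  unfolding psd_def
proof (intro conjI ballI)
  have Mc: "M \<in> carrier_mat n n" using M unfolding psd_def by simp
  show "B * M * B \<in> carrier_mat n n" using Mc B by simp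
  fix v :: "complex vec" assume v: "v \<in> carrier_vec n"
  define w where "w = B *\<^sub>v v"
  have w: "w \<in> carrier_vec n" using B v unfolding w_def by simp
  have "(B * M * B) *\<^sub>v v = B *\<^sub>v (M *\<^sub>v w)" using B Mc v unfolding w_def
    by (simp add: assoc_mult_mat_vec[of _ n n _ n])
  hence e: "conjugate v \<bullet> ((B * M * B) *\<^sub>v v) = conjugate w \<bullet> (M *\<^sub>v w)"
    using adj_move[OF B herm v, of "M *\<^sub>v w"] Mc w unfolding w_def by simp
  show "conjugate v \<bullet> ((B * M * B) *\<^sub>v v) \<in> \<real>" using M w e unfolding psd_def by simp
  show "0 \<le> Re (conjugate v \<bullet> ((B * M * B) *\<^sub>v v))" using M w e unfolding psd_def by simp
qed

lemma psd_scale: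
  fixes M :: "complex mat"
  assumes M: "psd n M" and r: "0 \<le> r"
  shows "psd n (complex_of_real r \<cdot>\<^sub>m M)"
  unfolding psd_def
proof (intro conjI ballI)
  have Mc: "M \<in> carrier_mat n n" using M unfolding psd_def by simp
  show "complex_of_real r \<cdot>\<^sub>m M \<in> carrier_mat n n" using Mc by simp
  fix v :: "complex vec" assume v: "v \<in> carrier_vec n"
  have "(complex_of_real r \<cdot>\<^sub>m M) *\<^sub>v v = complex_of_real r \<cdot>\<^sub>v (M *\<^sub>v v)"
    using Mc v by (intro eq_vecI) (auto simp: scalar_prod_def sum_distrib_left mult.assoc)
  hence e: "conjugate v \<bullet> ((complex_of_real r \<cdot>\<^sub>m M) *\<^sub>v v) = complex_of_real r * (conjugate v \<bullet> (M *\<^sub>v v))"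
    using Mc v by simp
  have h: "conjugate v \<bullet> (M *\<^sub>v v) \<in> \<real>" "0 \<le> Re (conjugate v \<bullet> (M *\<^sub>v v))" using M v unfolding psd_def by auto
  show "conjugate v \<bullet> ((complex_of_real r \<cdot>\<^sub>m M) *\<^sub>v v) \<in> \<real>" using e h by simp
  show "0 \<le> Re (conjugate v \<bullet> ((complex_of_real r \<cdot>\<^sub>m M) *\<^sub>v v))" using e h r by simp
qed

lemma psd_diag:
  fixes M :: "complex mat"
  assumes M: "psd n M" and i: "i < n"
  shows "M $$ (i,i) \<in> \<real> \<and> 0 \<le> Re (M $$ (i,i))"
proof -
  have Mc: "M \<in> carrier_mat n n" using M unfolding psd_def by simp
  have "conjugate (unit_vec n i) \<bullet> (M *\<^sub>v unit_vec n i) = M $$ (i,i)"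
  proof -
    have cu: "conjugate (unit_vec n i) = (unit_vec n i :: complex vec)" by (rule eq_vecI) (auto simp: unit_vec_def)
    have "(M *\<^sub>v unit_vec n i) $ i = M $$ (i,i)" using Mc i by simp
    thus ?thesis unfolding cu using Mc i by (subst scalar_prod_left_unit) auto
  qed
  thus ?thesis using M i unfolding psd_def by (metis unit_vec_carrier)
qed

lemma psd_trace:
  fixes M :: "complex mat"
  assumes M: "psd n M"
  shows "mtrace M \<in> \<real> \<and> 0 \<le> Re (mtrace M)"
proof -
  have Mc: "M \<in> carrier_mat n n" using M unfolding psd_def by simp
  have t: "mtrace M = (\<Sum>i<n. M $$ (i,i))" using Mc unfolding mtrace_def by simp
  have "(\<Sum>i<n. M $$ (i,i)) \<in> \<real>" using psd_diag[OF M] by (intro sum_in_Reals) simp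
  moreover have "0 \<le> Re (\<Sum>i<n. M $$ (i,i))" unfolding Re_sum using psd_diag[OF M] by (intro sum_nonneg) simp
  ultimately show ?thesis unfolding t by simp
qed

lemma trace_comm:
  fixes A B :: "complex mat"
  assumes "A \<in> carrier_mat n n" "B \<in> carrier_mat n n"
  shows "mtrace (A * B) = mtrace (B * A)"
proof -
  have "mtrace (A * B) = (\<Sum>i<n. \<Sum>k<n. A $$ (i,k) * B $$ (k,i))"
    using assms unfolding mtrace_def by (auto simp: scalar_prod_def lessThan_atLeast0 intro!: sum.cong)
  also have "\<dots> = (\<Sum>k<n. \<Sum>i<n. B $$ (k,i) * A $$ (i,k))"
    by (subst sum.swap) (simp add: mult.commute)
  also have "\<dots> = mtrace (B * A)"
    using assms unfolding mtrace_def by (auto simp: scalar_prod_def lessThan_atLeast0 intro!: sum.cong)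
  finally show ?thesis .
qed





lemma ptrace_carrier: "ptrace_B dA dB R \<in> carrier_mat dA dA"
  unfolding ptrace_B_def by simp

lemma ptrace_index: "x < dA \<Longrightarrow> y < dA \<Longrightarrow> ptrace_B dA dB R $$ (x,y) = (\<Sum>k<dB. R $$ (x*dB+k, y*dB+k))"
  unfolding ptrace_B_def by simp

lemma key:
  fixes \<rho> \<sigma> P :: "complex mat" and c :: complex and q :: real
  assumes P: "projector dA P" and \<rho>: "\<rho> \<in> carrier_mat (dA*dB) (dA*dB)"
    and \<sigma>: "\<sigma> \<in> carrier_mat dB dB" and q: "0 < q"
    and L: "loewner_le (dA*dB) \<rho> (c \<cdot>\<^sub>m kron (ptrace_B dA dB \<rho>) \<sigma>)"
  shows "loewner_le (dA*dB) ((1 / complex_of_real q) \<cdot>\<^sub>m (kron P (1\<^sub>m dB) * \<rho> * kron P (1\<^sub>m dB)))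
     (c \<cdot>\<^sub>m kron (ptrace_B dA dB ((1 / complex_of_real q) \<cdot>\<^sub>m (kron P (1\<^sub>m dB) * \<rho> * kron P (1\<^sub>m dB)))) \<sigma>)"
proof -
  define n where "n = dA*dB"
  define Pi where "Pi = kron P (1\<^sub>m dB)"
  define p where "p = complex_of_real q"
  define \<rho>i where "\<rho>i = (1 / p) \<cdot>\<^sub>m (Pi * \<rho> * Pi)"
  define \<rho>A where "\<rho>A = ptrace_B dA dB \<rho>"
  define M where "M = c \<cdot>\<^sub>m kron \<rho>A \<sigma> - \<rho>"
  have Pc: "P \<in> carrier_mat dA dA" using P unfolding projector_def by simp
  have Pic: "Pi \<in> carrier_mat n n" using kron_carrier[of P "1\<^sub>m dB"] Pc unfolding Pi_def n_def by simp
  have \<rho>c: "\<rho> \<in> carrier_mat n n" using \<rho> unfolding n_def .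
  have \<rho>Ac: "\<rho>A \<in> carrier_mat dA dA" unfolding \<rho>A_def by (rule ptrace_carrier)
  have Kc: "kron \<rho>A \<sigma> \<in> carrier_mat n n" using kron_carrier[of \<rho>A \<sigma>] \<rho>Ac \<sigma> unfolding n_def by simp
  have \<rho>ic: "\<rho>i \<in> carrier_mat n n" using Pic \<rho>c unfolding \<rho>i_def by simp
  have K2c: "kron (ptrace_B dA dB \<rho>i) \<sigma> \<in> carrier_mat n n"
    using kron_carrier[of "ptrace_B dA dB \<rho>i" \<sigma>] ptrace_carrier[of dA dB \<rho>i] \<sigma> unfolding n_def by simp
  have Mpsd: "psd n M" using L unfolding loewner_le_def M_def \<rho>A_def n_def by simp
  have Mc: "M \<in> carrier_mat n n" using Mpsd unfolding psd_def by simp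
  have herm: "\<And>i k. i < n \<Longrightarrow> k < n \<Longrightarrow> Pi $$ (k,i) = cnj (Pi $$ (i,k))"
    unfolding Pi_def n_def by (rule kron_herm[OF P])
  have psd2: "psd n (complex_of_real (1/q) \<cdot>\<^sub>m (Pi * M * Pi))"
    using psd_scale[OF psd_congr[OF Mpsd Pic herm], of "1/q"] q by simp
  have eq: "c \<cdot>\<^sub>m kron (ptrace_B dA dB \<rho>i) \<sigma> - \<rho>i = complex_of_real (1/q) \<cdot>\<^sub>m (Pi * M * Pi)"
  proof (rule eq_matI)
    fix i j assume "i < dim_row (complex_of_real (1/q) \<cdot>\<^sub>m (Pi * M * Pi))"
      "j < dim_col (complex_of_real (1/q) \<cdot>\<^sub>m (Pi * M * Pi))"
    hence i: "i < dA*dB" and j: "j < dA*dB" using Pic unfolding n_def by auto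
    define x where "x = i div dB"
    define y where "y = j div dB"
    define s where "s = i mod dB"
    define t where "t = j mod dB"
    have x: "x < dA" and y: "y < dA" and s: "s < dB" and t: "t < dB"
      using div_lt[OF i] div_lt[OF j] mod_lt[OF i] mod_lt[OF j] unfolding x_def y_def s_def t_def by auto
    define T where "T = (\<Sum>a<dA. \<Sum>b<dA. P $$ (x, a) * \<rho>A $$ (a,b) * P $$ (b, y))"
    define R where "R = (\<Sum>a<dA. \<Sum>b<dA. P $$ (x, a) * \<rho> $$ (a*dB + s, b*dB + t) * P $$ (b, y))"
    have PrP: "(Pi * \<rho> * Pi) $$ (i,j) = R"
      unfolding R_def Pi_def x_def y_def s_def t_def using kron_sandwich[OF Pc \<rho> i j] .
    have pt: "ptrace_B dA dB \<rho>i $$ (x,y) = (1/p) * T"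
    proof -
      have "ptrace_B dA dB \<rho>i $$ (x,y) = (\<Sum>k<dB. \<rho>i $$ (x*dB+k, y*dB+k))"
        using x y by (rule ptrace_index)
      also have "\<dots> = (\<Sum>k<dB. (1/p) * (\<Sum>a<dA. \<Sum>b<dA. P $$ (x, a) * \<rho> $$ (a*dB + k, b*dB + k) * P $$ (b, y)))"
      proof (intro sum.cong refl)
        fix k assume k: "k \<in> {..<dB}"
        have xk: "x*dB+k < dA*dB" "y*dB+k < dA*dB" using x y k idx_lt by auto
        show "\<rho>i $$ (x*dB+k, y*dB+k) = (1/p) * (\<Sum>a<dA. \<Sum>b<dA. P $$ (x, a) * \<rho> $$ (a*dB + k, b*dB + k) * P $$ (b, y))"
        proof -
          have "\<rho>i $$ (x*dB+k, y*dB+k) = (1/p) * (Pi * \<rho> * Pi) $$ (x*dB+k, y*dB+k)"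
            unfolding \<rho>i_def using xk Pic \<rho>c n_def by (simp del: index_mult_mat(1))
          also have "(Pi * \<rho> * Pi) $$ (x*dB+k, y*dB+k) = (\<Sum>a<dA. \<Sum>b<dA. P $$ (x, a) * \<rho> $$ (a*dB + k, b*dB + k) * P $$ (b, y))"
            unfolding Pi_def using kron_sandwich[OF Pc \<rho> xk] k by simp
          finally show ?thesis .
        qed
      qed
      also have "\<dots> = (1/p) * (\<Sum>k<dB. \<Sum>a<dA. \<Sum>b<dA. P $$ (x, a) * \<rho> $$ (a*dB + k, b*dB + k) * P $$ (b, y))"
        by (simp add: sum_distrib_left)
      also have "(\<Sum>k<dB. \<Sum>a<dA. \<Sum>b<dA. P $$ (x, a) * \<rho> $$ (a*dB + k, b*dB + k) * P $$ (b, y))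
          = (\<Sum>a<dA. \<Sum>k<dB. \<Sum>b<dA. P $$ (x, a) * \<rho> $$ (a*dB + k, b*dB + k) * P $$ (b, y))"
        by (rule sum.swap)
      also have "\<dots> = (\<Sum>a<dA. \<Sum>b<dA. \<Sum>k<dB. P $$ (x, a) * \<rho> $$ (a*dB + k, b*dB + k) * P $$ (b, y))"
        by (intro sum.cong refl sum.swap)
      also have "\<dots> = T" unfolding T_def
      proof (intro sum.cong refl)
        fix a b assume a: "a \<in> {..<dA}" and b: "b \<in> {..<dA}"
        show "(\<Sum>k<dB. P $$ (x, a) * \<rho> $$ (a*dB + k, b*dB + k) * P $$ (b, y)) = P $$ (x, a) * \<rho>A $$ (a,b) * P $$ (b, y)"
          using a b unfolding \<rho>A_def by (simp add: ptrace_index sum_distrib_left sum_distrib_right mult.assoc)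
      qed
      finally show ?thesis .
    qed
    have MPi: "(Pi * M * Pi) $$ (i,j) = c * T * \<sigma> $$ (s,t) - R"
    proof -
      have "(Pi * M * Pi) $$ (i,j) = (\<Sum>a<dA. \<Sum>b<dA. P $$ (x, a) * M $$ (a*dB + s, b*dB + t) * P $$ (b, y))"
        unfolding Pi_def x_def y_def s_def t_def using kron_sandwich[OF Pc _ i j] Mc n_def by simp
      also have "\<dots> = (\<Sum>a<dA. \<Sum>b<dA. c * \<sigma> $$ (s,t) * (P $$ (x, a) * \<rho>A $$ (a,b) * P $$ (b, y))
                              - P $$ (x, a) * \<rho> $$ (a*dB + s, b*dB + t) * P $$ (b, y))"
      proof (intro sum.cong refl)
        fix a b assume a: "a \<in> {..<dA}" and b: "b \<in> {..<dA}"
        have ab: "a*dB+s < dA*dB" "b*dB+t < dA*dB" using a b s t idx_lt by auto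
        have hM: "M $$ (a*dB + s, b*dB + t) = c * (\<rho>A $$ (a,b) * \<sigma> $$ (s,t)) - \<rho> $$ (a*dB + s, b*dB + t)"
          unfolding M_def using ab Kc \<rho>c s t n_def kron_index_gen[OF ab \<rho>Ac \<sigma>] by simp
        show "P $$ (x, a) * M $$ (a*dB + s, b*dB + t) * P $$ (b, y) = c * \<sigma> $$ (s,t) * (P $$ (x, a) * \<rho>A $$ (a,b) * P $$ (b, y))
                              - P $$ (x, a) * \<rho> $$ (a*dB + s, b*dB + t) * P $$ (b, y)"
          unfolding hM by (simp add: algebra_simps)
      qed
      also have "\<dots> = c * \<sigma> $$ (s,t) * T - R"
        unfolding T_def R_def by (simp add: sum_subtractf sum_distrib_left)
      finally show ?thesis by simp
    qed
    have "(c \<cdot>\<^sub>m kron (ptrace_B dA dB \<rho>i) \<sigma> - \<rho>i) $$ (i,j) = c * (ptrace_B dA dB \<rho>i $$ (x,y) * \<sigma> $$ (s,t)) - (1/p) * R"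
    proof -
      have "(c \<cdot>\<^sub>m kron (ptrace_B dA dB \<rho>i) \<sigma> - \<rho>i) $$ (i,j) = c * kron (ptrace_B dA dB \<rho>i) \<sigma> $$ (i,j) - \<rho>i $$ (i,j)"
        using K2c \<rho>ic i j n_def by simp
      also have "kron (ptrace_B dA dB \<rho>i) \<sigma> $$ (i,j) = ptrace_B dA dB \<rho>i $$ (x,y) * \<sigma> $$ (s,t)"
        unfolding x_def y_def s_def t_def by (rule kron_index_gen[OF i j ptrace_carrier \<sigma>])
      also have "\<rho>i $$ (i,j) = (1/p) * (Pi * \<rho> * Pi) $$ (i,j)"
        unfolding \<rho>i_def using i j Pic \<rho>c n_def by (simp del: index_mult_mat(1))
      finally show ?thesis unfolding PrP .
    qed
    also have "\<dots> = complex_of_real (1/q) * (c * T * \<sigma> $$ (s,t) - R)"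
      unfolding pt p_def by (simp add: algebra_simps)
    also have "\<dots> = (complex_of_real (1/q) \<cdot>\<^sub>m (Pi * M * Pi)) $$ (i,j)"
      using MPi Pic Mc i j n_def by (simp del: index_mult_mat(1))
    finally show "(c \<cdot>\<^sub>m kron (ptrace_B dA dB \<rho>i) \<sigma> - \<rho>i) $$ (i,j) = (complex_of_real (1/q) \<cdot>\<^sub>m (Pi * M * Pi)) $$ (i,j)" .
  qed (use K2c \<rho>ic Pic Mc in auto)
  have "loewner_le n \<rho>i (c \<cdot>\<^sub>m kron (ptrace_B dA dB \<rho>i) \<sigma>)"
    unfolding loewner_le_def using \<rho>ic K2c psd2 eq by simp
  thus ?thesis unfolding n_def \<rho>i_def Pi_def p_def .
qed



theorem mainTheorem14:
  fixes dA dB :: nat and \<rho> :: "complex mat" and I :: "'i set" and P :: "'i \<Rightarrow> complex mat"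
  assumes "0 < dA" and "0 < dB"
    and "subnormalized_state (dA * dB) \<rho>"
    and "projective_measurement dA I P"
  shows "(SUP i \<in> {i \<in> I. mtrace (kron (P i) (1\<^sub>m dB) * \<rho>) \<noteq> 0}.
            Imax dA dB ((1 / mtrace (kron (P i) (1\<^sub>m dB) * \<rho>)) \<cdot>\<^sub>m
                        (kron (P i) (1\<^sub>m dB) * \<rho> * kron (P i) (1\<^sub>m dB))))
         \<le> Imax dA dB \<rho>"
proof (rule SUP_least)
  fix i assume "i \<in> {i \<in> I. mtrace (kron (P i) (1\<^sub>m dB) * \<rho>) \<noteq> 0}"
  hence iI: "i \<in> I" and p0: "mtrace (kron (P i) (1\<^sub>m dB) * \<rho>) \<noteq> 0" by auto
  define n where "n = dA*dB"
  define Pi where "Pi = kron (P i) (1\<^sub>m dB)"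
  define p where "p = mtrace (Pi * \<rho>)"
  have Pproj: "projector dA (P i)" using assms(4) iI unfolding projective_measurement_def by auto
  have Pc: "P i \<in> carrier_mat dA dA" using Pproj unfolding projector_def by simp
  have Pic: "Pi \<in> carrier_mat n n" using kron_carrier[of "P i" "1\<^sub>m dB"] Pc unfolding Pi_def n_def by simp
  have \<rho>psd: "psd n \<rho>" using assms(3) unfolding subnormalized_state_def n_def by simp
  have \<rho>c: "\<rho> \<in> carrier_mat n n" using \<rho>psd unfolding psd_def by simp
  have herm: "\<And>a k. a < n \<Longrightarrow> k < n \<Longrightarrow> Pi $$ (k,a) = cnj (Pi $$ (a,k))"
    unfolding Pi_def n_def by (rule kron_herm[OF Pproj])
  have idem: "Pi * Pi = Pi" unfolding Pi_def by (rule kron_idem[OF Pproj])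
  have "p = mtrace (Pi * Pi * \<rho>)" unfolding p_def idem ..
  also have "\<dots> = mtrace (Pi * (Pi * \<rho>))" using Pic \<rho>c by (simp add: assoc_mult_mat[of _ n n _ n _ n])
  also have "\<dots> = mtrace ((Pi * \<rho>) * Pi)" using Pic \<rho>c by (intro trace_comm[of _ n]) auto
  finally have pe: "p = mtrace (Pi * \<rho> * Pi)" .
  have "p \<in> \<real> \<and> 0 \<le> Re p" unfolding pe by (rule psd_trace[OF psd_congr[OF \<rho>psd Pic herm]])
  then obtain q where pq: "p = complex_of_real q" and q0: "0 \<le> q" by (metis Reals_cases Re_complex_of_real)
  have q: "0 < q" using q0 p0 pq unfolding p_def Pi_def by (cases "q = 0") auto
  show "Imax dA dB ((1 / mtrace (kron (P i) (1\<^sub>m dB) * \<rho>)) \<cdot>\<^sub>m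
                        (kron (P i) (1\<^sub>m dB) * \<rho> * kron (P i) (1\<^sub>m dB))) \<le> Imax dA dB \<rho>"
    unfolding Pi_def[symmetric] p_def[symmetric] pq Imax_def
  proof (rule Inf_greatest)
    fix z assume "z \<in> {Dmax (dA * dB) \<rho> (kron (ptrace_B dA dB \<rho>) \<sigma>) |\<sigma>. normalized_state dB \<sigma>}"
    then obtain \<sigma> where z: "z = Dmax (dA * dB) \<rho> (kron (ptrace_B dA dB \<rho>) \<sigma>)" and \<sigma>n: "normalized_state dB \<sigma>" by auto
    have \<sigma>c: "\<sigma> \<in> carrier_mat dB dB" using \<sigma>n unfolding normalized_state_def psd_def by simp
    define \<rho>i where "\<rho>i = (1 / complex_of_real q) \<cdot>\<^sub>m (Pi * \<rho> * Pi)"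
    have "Inf {Dmax (dA * dB) \<rho>i (kron (ptrace_B dA dB \<rho>i) \<sigma>') |\<sigma>'. normalized_state dB \<sigma>'}
        \<le> Dmax (dA * dB) \<rho>i (kron (ptrace_B dA dB \<rho>i) \<sigma>)"
      using \<sigma>n by (intro Inf_lower) auto
    also have "\<dots> \<le> z" unfolding z Dmax_def
    proof (rule Inf_superset_mono, safe)
      fix l assume "loewner_le (dA * dB) \<rho> (complex_of_real (2 powr l) \<cdot>\<^sub>m kron (ptrace_B dA dB \<rho>) \<sigma>)"
      hence "loewner_le (dA * dB) \<rho>i (complex_of_real (2 powr l) \<cdot>\<^sub>m kron (ptrace_B dA dB \<rho>i) \<sigma>)"
        unfolding \<rho>i_def Pi_def using key[OF Pproj _ \<sigma>c q] \<rho>c n_def by blast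
      thus "\<exists>l'. ereal l = ereal l' \<and> loewner_le (dA * dB) \<rho>i (complex_of_real (2 powr l') \<cdot>\<^sub>m kron (ptrace_B dA dB \<rho>i) \<sigma>)"
        by blast
    qed
    finally show "Inf {Dmax (dA * dB) \<rho>i (kron (ptrace_B dA dB \<rho>i) \<sigma>') |\<sigma>'. normalized_state dB \<sigma>'} \<le> z" .
  qed
qed


end
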